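(* Assume $\langle f\rangle_X=0$, $N/p\in\mathbb N$, and that $\psi$ satisfies (A1) and (A2). Then there exist constants $C_1,C_2$, depending only on $c_\psi,C_\psi,C'_\psi$ and $p$ (in particular independent of $\epsilon$ and $f$), such that \[ |u^{\rm c}-u|_{H^1}\le \epsilon\, C_1\|f\|_{L^2},\qquad |\langle u^{\rm c}\rangle_X|\le \epsilon^2 C_2\|f\|_{L^2}, \] where $u$ is the solution of the atomistic problem, $u^0$ the solution of the homogenized problem, and $u^{\rm c}$ the corrector.
   Context: Let $\epsilon>0$ and $N,p$ be positive integers, with the normalization $N\epsilon=1$. Set $X_i=\epsilon i$ ($i\in\mathbb Z$) and $Y_j=j$ ($j\in\mathbb Z$). $U^N_{\rm per}(\epsilon\mathbb Z)$ is the space of functions $u:\epsilon\mathbb Z\to\mathbb R$ with $u(X_{i+N})=u(X_i)$ for all $i$, and $U^N_\#(\epsilon\mathbb Z)$ is the subspace with $\langle u\rangle_X:=\frac1N\sum_{i=1}^N u(X_i)=0$. For $u,v\in U^N_{\rm per}(\epsilon\mathbb Z)$: $\langle u,v\rangle_X=\frac1N\sum_{i=1}^N u(X_i)v(X_i)$, $Du(X_i)=(u(X_{i+1})-u(X_i))/\epsilon$, $\|u\|_{L^q}=(\frac1N\sum_{i=1}^N|u(X_i)|^q)^{1/q}$, $|u|_{H^1}=\|Du\|_{L^2}$. A two-scale function is $g:\epsilon\mathbb Z\times\mathbb Z\to\mathbb R$ with $g(X_{i+N},Y_j)=g(X_i,Y_j)=g(X_i,Y_{j+p})$; set $D_Xg(X_i,Y_j)=(g(X_{i+1},Y_j)-g(X_i,Y_j))/\epsilon$,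 $D_Yg(X_i,Y_j)=g(X_i,Y_{j+1})-g(X_i,Y_j)$, $\langle g\rangle_Y(X_i)=\frac1p\sum_{j=1}^p g(X_i,Y_j)$, $\|g\|_{L^\infty(N,p)}=\max_{1\le i\le N,1\le j\le p}|g(X_i,Y_j)|$. $\psi$ is a two-scale function satisfying (A1) $0<c_\psi\le\psi(X_i,Y_j)\le C_\psi$ for all $i,j$, and (A2) $\|D_X\psi\|_{L^\infty(N,p)}\le C'_\psi$. Define $\psi^\epsilon(X_i)=\psi(X_i,X_i/\epsilon)$ and the homogenized tensor $\psi^0(X_i)=\langle 1/\psi(X_i,\cdot)\rangle_Y^{-1}$. The cell solution $\chi$ is the two-scale function with $\langle\chi(X_i,\cdot)\rangle_Y=0$ for all $i$ and $-D_Y(\psi D_Y\chi)=D_Y\psi$ at every $(X_i,Y_j)$. $f\in U^N_{\rm per}(\epsilon\mathbb Z)$. The atomistic problem: $u\in U^N_\#(\epsilon\mathbb Z)$ with $\langle\psi^\epsilon Du,Dv\rangle_X=\langle f,v\rangle_X$ for all $v\in U^N_{\rm per}(\epsilon\mathbb Z)$. The homogenized problem: $u^0\in U^N_\#(\epsilon\mathbb Z)$ with $\langle\psi^0Du^0,Dv\rangle_X=\langle f,v\rangle_X$ for all $v\in U^N_{\rm per}(\epsilon\mathbb Z)$. The corrector is $u^{\rm c}(X_i)=u^0(X_i)+\epsilon\,\chi(X_i,X_i/\epsilon)\,Du^0(X_i)$. *)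

theory Defs
  imports Complex_Main
begin

text \<open>Lattice functions on eps Z are represented by their index: u i stands for u(X_i),
  X_i = eps * i with eps = 1/N. Two-scale functions g i j stand for g(X_i, Y_j), Y_j = j.\<close>

definition per :: "nat \<Rightarrow> (int \<Rightarrow> real) \<Rightarrow> bool" where
  "per N u \<longleftrightarrow> (\<forall>i. u (i + int N) = u i)"

definition per2 :: "nat \<Rightarrow> nat \<Rightarrow> (int \<Rightarrow> int \<Rightarrow> real) \<Rightarrow> bool" where
  "per2 N p g \<longleftrightarrow> (\<forall>i j. g (i + int N) j = g i j \<and> g i (j + int p) = g i j)"

definition avgX :: "nat \<Rightarrow> (int \<Rightarrow> real) \<Rightarrow> real" where
  "avgX N u = (1 / real N) * (\<Sum>i = 1..int N. u i)"

definition ipX :: "nat \<Rightarrow> (int \<Rightarrow> real) \<Rightarrow> (int \<Rightarrow> real) \<Rightarrow> real" where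
  "ipX N u v = avgX N (\<lambda>i. u i * v i)"

definition Dd :: "real \<Rightarrow> (int \<Rightarrow> real) \<Rightarrow> int \<Rightarrow> real" where
  "Dd eps u i = (u (i + 1) - u i) / eps"

definition normL2 :: "nat \<Rightarrow> (int \<Rightarrow> real) \<Rightarrow> real" where
  "normL2 N u = sqrt (avgX N (\<lambda>i. (u i)\<^sup>2))"

definition semiH1 :: "nat \<Rightarrow> real \<Rightarrow> (int \<Rightarrow> real) \<Rightarrow> real" where
  "semiH1 N eps u = normL2 N (Dd eps u)"

definition DX :: "real \<Rightarrow> (int \<Rightarrow> int \<Rightarrow> real) \<Rightarrow> int \<Rightarrow> int \<Rightarrow> real" where
  "DX eps g i j = (g (i + 1) j - g i j) / eps"

definition DY :: "(int \<Rightarrow> int \<Rightarrow> real) \<Rightarrow> int \<Rightarrow> int \<Rightarrow> real" where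
  "DY g i j = g i (j + 1) - g i j"

definition avgY :: "nat \<Rightarrow> (int \<Rightarrow> real) \<Rightarrow> real" where
  "avgY p h = (1 / real p) * (\<Sum>j = 1..int p. h j)"

definition normLinf2 :: "nat \<Rightarrow> nat \<Rightarrow> (int \<Rightarrow> int \<Rightarrow> real) \<Rightarrow> real" where
  "normLinf2 N p g = Max ((\<lambda>(i, j). \<bar>g i j\<bar>) ` ({1..int N} \<times> {1..int p}))"

text \<open>psi^eps(X_i) = psi(X_i, X_i/eps) = psi(X_i, Y_i).\<close>
definition oscil :: "(int \<Rightarrow> int \<Rightarrow> real) \<Rightarrow> int \<Rightarrow> real" where
  "oscil g i = g i i"

definition psi_hom :: "nat \<Rightarrow> (int \<Rightarrow> int \<Rightarrow> real) \<Rightarrow> int \<Rightarrow> real" where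
  "psi_hom p psi i = 1 / avgY p (\<lambda>j. 1 / psi i j)"

definition cell_solution :: "nat \<Rightarrow> nat \<Rightarrow> (int \<Rightarrow> int \<Rightarrow> real) \<Rightarrow> (int \<Rightarrow> int \<Rightarrow> real) \<Rightarrow> bool" where
  "cell_solution N p psi chi \<longleftrightarrow> per2 N p chi \<and> (\<forall>i. avgY p (chi i) = 0) \<and>
     (\<forall>i j. - DY (\<lambda>i' j'. psi i' j' * DY chi i' j') i j = DY psi i j)"

definition weak_sol :: "nat \<Rightarrow> (int \<Rightarrow> real) \<Rightarrow> (int \<Rightarrow> real) \<Rightarrow> (int \<Rightarrow> real) \<Rightarrow> bool" where
  "weak_sol N a f u \<longleftrightarrow> per N u \<and> avgX N u = 0 \<and>
     (\<forall>v. per N v \<longrightarrow> ipX N (\<lambda>i. a i * Dd (1 / real N) u i) (Dd (1 / real N) v) = ipX N f v)"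

definition corrector :: "nat \<Rightarrow> (int \<Rightarrow> int \<Rightarrow> real) \<Rightarrow> (int \<Rightarrow> real) \<Rightarrow> int \<Rightarrow> real" where
  "corrector N chi u0 i = u0 i + (1 / real N) * chi i i * Dd (1 / real N) u0 i"

end

theory Submission
  imports Defs
begin


lemma sum_int_conv: "(\<Sum>i = 1..int N. F i) = (\<Sum>k<N. F (1 + int k))"
proof -
  have "{1..int N} = (\<lambda>k. 1 + int k) ` {..<N}"
  proof
    show "{1..int N} \<subseteq> (\<lambda>k. 1 + int k) ` {..<N}"
    proof
      fix i assume "i \<in> {1..int N}"
      then have "i = 1 + int (nat (i - 1))" "nat (i - 1) < N" by auto
      then show "i \<in> (\<lambda>k. 1 + int k) ` {..<N}" by blast
    qed
  qed auto
  moreover have "inj_on (\<lambda>k. 1 + int k) {..<N}" by (auto simp: inj_on_def)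
  ultimately show ?thesis by (simp add: sum.reindex)
qed

lemma per_shift_step:
  assumes "\<And>j. h (j + int n) = (h j :: real)"
  shows "(\<Sum>r<n. h (a + 1 + int r)) = (\<Sum>r<n. h (a + int r))"
proof -
  have "(\<Sum>r<n. h (a + 1 + int r)) = (\<Sum>r<n. (\<lambda>r. h (a + int r)) (Suc r))"
    by (simp add: add.commute add.left_commute)
  also have "\<dots> = (\<Sum>r<Suc n. h (a + int r)) - h (a + int 0)"
    by (subst sum.lessThan_Suc_shift) simp
  also have "\<dots> = (\<Sum>r<n. h (a + int r))" using assms[of a] by simp
  finally show ?thesis .
qed

lemma per_shift:
  assumes "\<And>j. h (j + int n) = (h j :: real)"
  shows "(\<Sum>r<n. h (b + int r)) = (\<Sum>r<n. h (a + int r))"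
proof (induction b rule: int_induct[where k=a])
  case base then show ?case by simp
next
  case (step1 i) then show ?case using per_shift_step[where h=h, OF assms, of i] by simp
next
  case (step2 i) then show ?case using per_shift_step[where h=h, OF assms, of "i - 1"] by simp
qed

lemma incr_bound:
  "\<bar>g (a + int r) - g a\<bar> \<le> (\<Sum>k<r. \<bar>g (a + int k + 1) - g (a + int k)\<bar>)" for g :: "int \<Rightarrow> real"
proof (induction r)
  case 0 then show ?case by simp
next
  case (Suc r)
  have e: "g (a + int (Suc r)) = g (a + int r + 1)" by (simp add: algebra_simps)
  have "\<bar>g (a + int (Suc r)) - g a\<bar> \<le> \<bar>g (a + int r + 1) - g (a + int r)\<bar> + \<bar>g (a + int r) - g a\<bar>"
    unfolding e by linarith
  then show ?case using Suc by simp
qed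

lemma incr_bound_const:
  assumes "\<And>j. \<bar>g (j + 1) - g j\<bar> \<le> (d::real)"
  shows "\<bar>g (a + int r) - g a\<bar> \<le> real r * d"
proof -
  have "\<bar>g (a + int r) - g a\<bar> \<le> (\<Sum>k<r. \<bar>g (a + int k + 1) - g (a + int k)\<bar>)" by (rule incr_bound)
  also have "\<dots> \<le> (\<Sum>k<r. d)" by (rule sum_mono) (rule assms)
  finally show ?thesis by simp
qed

lemma weighted_zero:
  fixes q h :: "nat \<Rightarrow> real"
  assumes "0 < n" "\<And>r. r < n \<Longrightarrow> 0 < q r" "(\<Sum>r<n. q r * h r) = 0"
    "\<And>r. r < n \<Longrightarrow> \<bar>h r - h 0\<bar> \<le> B"
  shows "\<bar>h 0\<bar> \<le> B"
proof -
  have Q: "0 < (\<Sum>r<n. q r)" using assms(1,2) by (intro sum_pos) auto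
  have "h 0 * (\<Sum>r<n. q r) = (\<Sum>r<n. q r * (h 0 - h r))"
    using assms(3) by (simp add: sum_distrib_left sum_subtractf algebra_simps)
  moreover have "\<bar>h 0\<bar> * (\<Sum>r<n. q r) = \<bar>h 0 * (\<Sum>r<n. q r)\<bar>"
    using Q by (simp add: abs_mult)
  ultimately have "\<bar>h 0\<bar> * (\<Sum>r<n. q r) = \<bar>\<Sum>r<n. q r * (h 0 - h r)\<bar>" by simp
  also have "\<dots> \<le> (\<Sum>r<n. \<bar>q r * (h 0 - h r)\<bar>)" by (rule sum_abs)
  also have "\<dots> \<le> (\<Sum>r<n. q r * B)"
  proof (rule sum_mono)
    fix r assume "r \<in> {..<n}"
    then show "\<bar>q r * (h 0 - h r)\<bar> \<le> q r * B" using assms(2,4)[of r]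
      by (simp add: abs_mult abs_minus_commute mult_left_mono)
  qed
  also have "\<dots> = B * (\<Sum>r<n. q r)" by (simp add: sum_distrib_left mult.commute)
  finally show ?thesis using Q by simp
qed

lemma zero_mean_bound:
  fixes h :: "int \<Rightarrow> real"
  assumes "0 < p" "\<And>j. h (j + int p) = h j" "(\<Sum>r<p. h (1 + int r)) = 0"
    "\<And>j. \<bar>h (j + 1) - h j\<bar> \<le> d"
  shows "\<bar>h j\<bar> \<le> real p * d"
proof -
  have "(\<Sum>r<p. 1 * h (j + int r)) = 0" using per_shift[where h=h, OF assms(2), of j 1] assms(3) by simp
  moreover have "\<bar>h (j + int r) - h (j + int 0)\<bar> \<le> real p * d" if "r < p" for r
  proof -
    have d0: "0 \<le> d" using assms(4)[of 0] by linarith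
    have "\<bar>h (j + int r) - h j\<bar> \<le> real r * d" by (rule incr_bound_const[where g=h, OF assms(4)])
    also have "\<dots> \<le> real p * d" using that d0 by (simp add: mult_right_mono)
    finally show ?thesis by simp
  qed
  ultimately have "\<bar>(\<lambda>r. h (j + int r)) 0\<bar> \<le> real p * d"
    using weighted_zero[of p "\<lambda>_. 1" "\<lambda>r. h (j + int r)" "real p * d"] assms(1) by simp
  then show ?thesis by simp
qed

lemma cs_sum:
  fixes f :: "nat \<Rightarrow> real"
  shows "(\<Sum>k<N. \<bar>f k\<bar>)\<^sup>2 \<le> real N * (\<Sum>k<N. (f k)\<^sup>2)"
proof (cases "N = 0")
  case True then show ?thesis by simp
next
  case False
  define m where "m = (\<Sum>k<N. \<bar>f k\<bar>) / real N"
  have "0 \<le> (\<Sum>k<N. (\<bar>f k\<bar> - m)\<^sup>2)" by (rule sum_nonneg) simp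
  also have "\<dots> = (\<Sum>k<N. (f k)\<^sup>2) - 2 * m * (\<Sum>k<N. \<bar>f k\<bar>) + real N * m\<^sup>2"
    by (simp add: power2_eq_square algebra_simps sum.distrib sum_subtractf sum_distrib_left)
  also have "\<dots> = (\<Sum>k<N. (f k)\<^sup>2) - (\<Sum>k<N. \<bar>f k\<bar>)\<^sup>2 / real N"
    using False by (simp add: m_def power2_eq_square field_simps)
  finally show ?thesis using False by (simp add: field_simps)
qed

lemma group_sum:
  fixes F :: "nat \<Rightarrow> real"
  shows "(\<Sum>k<q*p. F k) = (\<Sum>m<q. \<Sum>r<p. F (m*p + r))"
proof -
  have "(\<Sum>k<q*p. F k) = (\<Sum>m<q. sum F {m*p..<m*p+p})" by (simp add: sum.nat_group)
  also have "\<dots> = (\<Sum>m<q. \<Sum>r<p. F (m*p + r))"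
  proof (rule sum.cong[OF refl])
    fix m
    have "sum F {m*p..<m*p+p} = sum F {0+m*p..<p+m*p}" by (simp add: add.commute)
    also have "\<dots> = (\<Sum>r\<in>{0..<p}. F (r + m*p))" by (rule sum.shift_bounds_nat_ivl)
    also have "\<dots> = (\<Sum>r<p. F (m*p + r))" by (simp add: atLeast0LessThan add.commute)
    finally show "sum F {m*p..<m*p+p} = (\<Sum>r<p. F (m*p + r))" .
  qed
  finally show ?thesis .
qed

lemma block_inner:
  fixes w :: "int \<Rightarrow> int \<Rightarrow> real" and s g :: "int \<Rightarrow> real"
  assumes "0 < p" "0 \<le> e"
    "\<And>i j. w i (j + int p) = w i j" "\<And>i. (\<Sum>r<p. w i (1 + int r)) = 0"
    "\<And>i j. \<bar>w i j\<bar> \<le> W" "\<And>i j. \<bar>w (i+1) j - w i j\<bar> \<le> e*L"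
    "\<And>i. \<bar>s i\<bar> \<le> S" "\<And>i. \<bar>s (i+1) - s i\<bar> \<le> e*\<bar>g (i+1)\<bar>"
  shows "\<bar>\<Sum>r<p. s (b + int r) * w (b + int r) (b + int r)\<bar>
     \<le> real p * real p * e * S * L + real p * W * e * (\<Sum>r<p. \<bar>g (b + 1 + int r)\<bar>)"
proof -
  have S0: "0 \<le> S" using assms(7)[of 0] by linarith
  have W0: "0 \<le> W" using assms(5)[of 0 0] by linarith
  have L0: "0 \<le> e*L" using assms(6)[of 0 0] by linarith
  define G where "G = (\<Sum>r<p. \<bar>g (b + 1 + int r)\<bar>)"
  have split: "(\<Sum>r<p. s (b + int r) * w (b + int r) (b + int r)) =
     (\<Sum>r<p. s (b + int r) * (w (b + int r) (b + int r) - w b (b + int r)))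
     + (\<Sum>r<p. (s (b + int r) - s b) * w b (b + int r)) + s b * (\<Sum>r<p. w b (b + int r))"
  proof -
    have "\<And>r. s (b + int r) * w (b + int r) (b + int r) =
      s (b + int r) * (w (b + int r) (b + int r) - w b (b + int r))
     + (s (b + int r) - s b) * w b (b + int r) + s b * w b (b + int r)"
      by (simp add: algebra_simps)
    then show ?thesis by (simp only: sum.distrib sum_distrib_left)
  qed
  have z: "(\<Sum>r<p. w b (b + int r)) = 0"
    using per_shift[where h="w b", OF assms(3), of b 1] assms(4)[of b] by simp
  have t1: "\<bar>\<Sum>r<p. s (b + int r) * (w (b + int r) (b + int r) - w b (b + int r))\<bar>
      \<le> real p * real p * e * S * L"
  proof -
    have "\<bar>\<Sum>r<p. s (b + int r) * (w (b + int r) (b + int r) - w b (b + int r))\<bar>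
       \<le> (\<Sum>r<p. \<bar>s (b + int r) * (w (b + int r) (b + int r) - w b (b + int r))\<bar>)"
      by (rule sum_abs)
    also have "\<dots> \<le> (\<Sum>r<p. S * (real p * (e * L)))"
    proof (rule sum_mono)
      fix r assume r: "r \<in> {..<p}"
      have "\<bar>w (b + int r) (b + int r) - w b (b + int r)\<bar> \<le> real r * (e * L)"
        by (rule incr_bound_const[where g="\<lambda>i. w i (b + int r)", OF assms(6)])
      also have "\<dots> \<le> real p * (e * L)" using r L0 by (intro mult_right_mono) auto
      finally have "\<bar>w (b + int r) (b + int r) - w b (b + int r)\<bar> \<le> real p * (e * L)" .
      then show "\<bar>s (b + int r) * (w (b + int r) (b + int r) - w b (b + int r))\<bar> \<le> S * (real p * (e * L))"
        unfolding abs_mult using assms(7) S0 by (intro mult_mono) auto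
    qed
    also have "\<dots> = real p * real p * e * S * L" by simp
    finally show ?thesis .
  qed
  have t2: "\<bar>\<Sum>r<p. (s (b + int r) - s b) * w b (b + int r)\<bar> \<le> real p * W * e * G"
  proof -
    have G0: "0 \<le> G" unfolding G_def by (simp add: sum_nonneg)
    have "\<bar>\<Sum>r<p. (s (b + int r) - s b) * w b (b + int r)\<bar>
       \<le> (\<Sum>r<p. \<bar>(s (b + int r) - s b) * w b (b + int r)\<bar>)"
      by (rule sum_abs)
    also have "\<dots> \<le> (\<Sum>r<p. (e * G) * W)"
    proof (rule sum_mono)
      fix r assume r: "r \<in> {..<p}"
      have "\<bar>s (b + int r) - s b\<bar> \<le> (\<Sum>k<r. \<bar>s (b + int k + 1) - s (b + int k)\<bar>)"
        by (rule incr_bound)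
      also have "\<dots> \<le> (\<Sum>k<r. e * \<bar>g (b + 1 + int k)\<bar>)"
      proof (rule sum_mono)
        fix k
        have "\<bar>s (b + int k + 1) - s (b + int k)\<bar> \<le> e * \<bar>g (b + int k + 1)\<bar>" by (rule assms(8))
        moreover have "b + 1 + int k = b + int k + 1" by simp
        ultimately show "\<bar>s (b + int k + 1) - s (b + int k)\<bar> \<le> e * \<bar>g (b + 1 + int k)\<bar>" by metis
      qed
      also have "\<dots> \<le> (\<Sum>k<p. e * \<bar>g (b + 1 + int k)\<bar>)"
        using r assms(2) by (intro sum_mono2) auto
      also have "\<dots> = e * G" unfolding G_def by (simp add: sum_distrib_left)
      finally have "\<bar>s (b + int r) - s b\<bar> \<le> e * G" .
      then show "\<bar>(s (b + int r) - s b) * w b (b + int r)\<bar> \<le> (e * G) * W"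
        unfolding abs_mult using assms(5) by (intro mult_mono) auto
    qed
    also have "\<dots> = real p * W * e * G" by simp
    finally show ?thesis .
  qed
  show ?thesis unfolding split z G_def[symmetric] using t1 t2 by simp
qed

lemma block_bound:
  fixes w :: "int \<Rightarrow> int \<Rightarrow> real" and s g :: "int \<Rightarrow> real"
  assumes "0 < p" "0 \<le> e" "N = q * p"
    "\<And>i j. w i (j + int p) = w i j" "\<And>i. (\<Sum>r<p. w i (1 + int r)) = 0"
    "\<And>i j. \<bar>w i j\<bar> \<le> W" "\<And>i j. \<bar>w (i+1) j - w i j\<bar> \<le> e*L"
    "\<And>i. \<bar>s i\<bar> \<le> S" "\<And>i. \<bar>s (i+1) - s i\<bar> \<le> e*\<bar>g (i+1)\<bar>"
  shows "\<bar>\<Sum>k<N. s (1 + int k) * w (1 + int k) (1 + int k)\<bar>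
     \<le> real q * (real p * real p * e * S * L) + real p * W * e * (\<Sum>k<N. \<bar>g (2 + int k)\<bar>)"
proof -
  define F where "F k = s (1 + int k) * w (1 + int k) (1 + int k)" for k
  define H where "H k = \<bar>g (2 + int k)\<bar>" for k
  have "(\<Sum>k<N. F k) = (\<Sum>m<q. \<Sum>r<p. F (m*p + r))" unfolding assms(3) by (rule group_sum)
  also have "\<dots> = (\<Sum>m<q. \<Sum>r<p. s ((1 + int (m*p)) + int r) * w ((1 + int (m*p)) + int r) ((1 + int (m*p)) + int r))"
    by (simp add: F_def add.assoc)
  finally have e1: "(\<Sum>k<N. F k) = \<dots>" .
  have "\<bar>\<Sum>k<N. F k\<bar> \<le> (\<Sum>m<q. \<bar>\<Sum>r<p. s ((1 + int (m*p)) + int r) * w ((1 + int (m*p)) + int r) ((1 + int (m*p)) + int r)\<bar>)"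
    unfolding e1 by (rule sum_abs)
  also have "\<dots> \<le> (\<Sum>m<q. real p * real p * e * S * L + real p * W * e * (\<Sum>r<p. \<bar>g ((1 + int (m*p)) + 1 + int r)\<bar>))"
    by (rule sum_mono, rule block_inner[where w=w and s=s and g=g, OF assms(1,2,4,5,6,7,8,9)])
  also have "\<dots> = real q * (real p * real p * e * S * L) + real p * W * e * (\<Sum>m<q. \<Sum>r<p. H (m*p + r))"
  proof -
    have "\<And>m r. \<bar>g ((1 + int (m*p)) + 1 + int r)\<bar> = H (m*p + r)"
      unfolding H_def by (rule arg_cong[where f="\<lambda>x. \<bar>g x\<bar>"]) simp
    then show ?thesis by (simp add: sum.distrib sum_distrib_left)
  qed
  also have "(\<Sum>m<q. \<Sum>r<p. H (m*p + r)) = (\<Sum>k<N. H k)"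
    unfolding assms(3) by (rule group_sum[symmetric])
  finally show ?thesis unfolding F_def H_def .
qed



lemma per_mult:
  fixes h :: "int \<Rightarrow> real"
  assumes "\<And>x. h (x + int n) = h x"
  shows "h (x + k * int n) = h x"
proof (induction k rule: int_induct[where k=0])
  case base then show ?case by simp
next
  case (step1 i)
  have "h (x + (i + 1) * int n) = h ((x + i * int n) + int n)" by (simp add: algebra_simps)
  then show ?case using assms step1 by simp
next
  case (step2 i)
  have "h (x + i * int n) = h ((x + (i - 1) * int n) + int n)" by (simp add: algebra_simps)
  then show ?case using assms step2 by simp
qed

lemma per_reduce:
  fixes h :: "int \<Rightarrow> real"
  assumes "\<And>x. h (x + int n) = h x" "0 < n"
  shows "\<exists>x'\<in>{1..int n}. h x = h x'"
proof -
  define x' where "x' = (x - 1) mod int n + 1"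
  have "x = x' + ((x - 1) div int n) * int n" unfolding x'_def
    by (metis add.commute diff_add_cancel minus_mod_eq_mult_div mult.commute add.left_commute
        mod_div_mult_eq)
  then have "h x = h x'" using per_mult[where h=h, OF assms(1)] by metis
  moreover have "x' \<in> {1..int n}" unfolding x'_def using assms(2)
    by (simp add: pos_mod_bound pos_mod_sign add1_zle_eq)
  ultimately show ?thesis by blast
qed


lemma weak_pointwise:
  assumes N0: "0 < N" and pa: "per N a" and ws: "weak_sol N a f u" and pf: "per N f"
  shows "a (i+1) * Dd (1/real N) u (i+1) = a i * Dd (1/real N) u i - f (i+1) / real N"
proof -
  define e where "e = 1 / real N"
  define \<sigma> where "\<sigma> i = a i * Dd e u i" for i
  have pu: "per N u" using ws by (simp add: weak_sol_def)
  have ps: "\<sigma> (i + int N) = \<sigma> i" for i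
  proof -
    have "u (i + int N + 1) = u (i + 1 + int N)" by (simp add: algebra_simps)
    also have "\<dots> = u (i + 1)" using pu by (simp add: per_def)
    finally show ?thesis using pa pu by (simp add: \<sigma>_def per_def Dd_def)
  qed
  define v where "v k = \<sigma> (k - 1) - \<sigma> k - f k / real N" for k
  have pv: "per N v" using ps pf unfolding v_def per_def
    by (metis add.commute add.left_commute add_diff_eq diff_add_eq)
  have "ipX N (\<lambda>i. a i * Dd (1 / real N) u i) (Dd (1 / real N) v) = ipX N f v"
    using ws pv by (simp add: weak_sol_def)
  then have W: "(1 / real N) * (\<Sum>k<N. \<sigma> (1 + int k) * ((v (1 + int k + 1) - v (1 + int k)) * real N))
      = (1 / real N) * (\<Sum>k<N. f (1 + int k) * v (1 + int k))"
    by (simp add: ipX_def avgX_def sum_int_conv Dd_def \<sigma>_def e_def)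
  have W2: "(\<Sum>k<N. \<sigma> (1 + int k) * (v (1 + int k + 1) - v (1 + int k)))
      = (\<Sum>k<N. f (1 + int k) * v (1 + int k)) / real N"
  proof -
    have "(\<Sum>k<N. \<sigma> (1 + int k) * ((v (1 + int k + 1) - v (1 + int k)) * real N))
      = real N * (\<Sum>k<N. \<sigma> (1 + int k) * (v (1 + int k + 1) - v (1 + int k)))"
      by (simp add: sum_distrib_left algebra_simps)
    then show ?thesis using W N0 by (simp add: field_simps)
  qed
  define h where "h x = \<sigma> (x - 1) * v x" for x
  have ph: "h (x + int N) = h x" for x
    using ps pv unfolding h_def per_def by (metis add_diff_eq diff_add_eq)
  have sh: "(\<Sum>k<N. h (2 + int k)) = (\<Sum>k<N. h (1 + int k))"
    by (rule per_shift[where h=h, OF ph])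
  have "(\<Sum>k<N. \<sigma> (1 + int k) * (v (1 + int k + 1) - v (1 + int k)))
      = (\<Sum>k<N. h (2 + int k)) - (\<Sum>k<N. \<sigma> (1 + int k) * v (1 + int k))"
    by (simp add: h_def algebra_simps sum_subtractf)
  also have "\<dots> = (\<Sum>k<N. (\<sigma> (int k) - \<sigma> (1 + int k)) * v (1 + int k))"
    unfolding sh by (simp add: h_def algebra_simps sum_subtractf)
  finally have "(\<Sum>k<N. (\<sigma> (int k) - \<sigma> (1 + int k)) * v (1 + int k))
      = (\<Sum>k<N. f (1 + int k) * v (1 + int k)) / real N" using W2 by simp
  then have "(\<Sum>k<N. (\<sigma> (int k) - \<sigma> (1 + int k) - f (1 + int k) / real N) * v (1 + int k)) = 0"
    by (simp add: algebra_simps sum_subtractf sum_divide_distrib sum.distrib)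
  then have "(\<Sum>k<N. (v (1 + int k))\<^sup>2) = 0"
    by (simp add: v_def power2_eq_square)
  then have z: "\<And>k. k < N \<Longrightarrow> v (1 + int k) = 0"
    by (subst (asm) sum_nonneg_eq_0_iff) auto
  have "v x = 0" for x
  proof -
    obtain x' where x': "x' \<in> {1..int N}" "v x = v x'"
      using per_reduce[where h=v, OF _ N0] pv unfolding per_def by blast
    then have "x' = 1 + int (nat (x' - 1))" "nat (x' - 1) < N" by auto
    then show ?thesis using z x' by metis
  qed
  from this[of "i+1"] show ?thesis by (simp add: v_def \<sigma>_def e_def)
qed


lemma Dd_sum_zero:
  assumes "per N u" "0 < N"
  shows "(\<Sum>k<N. Dd e u (i + int k)) = 0"
proof -
  have "(\<Sum>k<N. u (i + 1 + int k)) = (\<Sum>k<N. u (i + int k))"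
    by (rule per_shift_step[where h=u]) (use assms in \<open>simp add: per_def\<close>)
  then show ?thesis by (simp add: Dd_def sum_divide_distrib[symmetric] sum_subtractf add.commute add.left_commute)
qed

locale setting =
  fixes N p :: nat and psi chi :: "int \<Rightarrow> int \<Rightarrow> real" and f u u0 :: "int \<Rightarrow> real"
    and c C C' :: real
  assumes c0: "0 < c" and p0: "0 < p" and N0: "0 < N" and pdvd: "p dvd N"
    and perpsi: "per2 N p psi" and bnd: "\<And>i j. c \<le> psi i j \<and> psi i j \<le> C"
    and DXb: "normLinf2 N p (DX (1 / real N) psi) \<le> C'"
    and cell: "cell_solution N p psi chi" and perf: "per N f"
    and wu: "weak_sol N (oscil psi) f u" and wu0: "weak_sol N (psi_hom p psi) f u0"
begin

definition "e = 1 / real N"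
definition "A i = avgY p (\<lambda>j. 1 / psi i j)" for i
definition "psi0 = psi_hom p psi"

lemma e_pos: "0 < e" using N0 by (simp add: e_def)

lemma psi_lo: "c \<le> psi i j" and psi_hi: "psi i j \<le> C" using bnd by auto
lemma psi_pos: "0 < psi i j" using psi_lo[of i j] c0 by linarith
lemma cC: "c \<le> C" using psi_lo[of 0 0] psi_hi[of 0 0] by linarith
lemma C0: "0 < C" using cC c0 by linarith

lemma psi_perX: "psi (i + int N) j = psi i j" using perpsi by (simp add: per2_def)
lemma psi_perY: "psi i (j + int p) = psi i j" using perpsi by (simp add: per2_def)

lemma A_sum: "A i = (\<Sum>r<p. 1 / psi i (1 + int r)) / real p"
  by (simp add: A_def avgY_def sum_int_conv)

lemma A_bounds: "1 / C \<le> A i" "A i \<le> 1 / c"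
proof -
  have "(\<Sum>r<p. 1 / C) \<le> (\<Sum>r<p. 1 / psi i (1 + int r))"
    by (rule sum_mono) (use psi_hi psi_pos in \<open>simp add: frac_le\<close>)
  then show "1 / C \<le> A i" using p0 by (simp add: A_sum field_simps)
  have "(\<Sum>r<p. 1 / psi i (1 + int r)) \<le> (\<Sum>r<p. 1 / c)"
    by (rule sum_mono) (use psi_lo c0 in \<open>simp add: frac_le\<close>)
  then show "A i \<le> 1 / c" using p0 by (simp add: A_sum field_simps)
qed

lemma psi0_eq: "psi0 i = 1 / A i" by (simp add: psi0_def psi_hom_def A_def)

lemma psi0_bounds: "c \<le> psi0 i" "psi0 i \<le> C"
proof -
  have A0: "0 < A i" using A_bounds(1)[of i] cC c0 by (smt (verit) divide_pos_pos)
  show "c \<le> psi0 i" using A_bounds(2)[of i] A0 c0 unfolding psi0_eq by (simp add: field_simps)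
  show "psi0 i \<le> C" using A_bounds(1)[of i] A0 c0 cC unfolding psi0_eq by (simp add: field_simps)
qed

lemma psi0_pos: "0 < psi0 i" using psi0_bounds(1)[of i] c0 by linarith

lemma psi_per_gen: "\<exists>i'\<in>{1..int N}. \<exists>j'\<in>{1..int p}. psi (i+1) j - psi i j = psi (i'+1) j' - psi i' j'"
proof -
  define h where "h x = psi (x+1) j - psi x j" for x
  have "h (x + int N) = h x" for x unfolding h_def
    using psi_perX[of "x+1" j] psi_perX[of x j] by (simp add: algebra_simps)
  then obtain i' where i': "i' \<in> {1..int N}" "h i = h i'" using per_reduce[where h=h] N0 by blast
  define g where "g y = psi (i'+1) y - psi i' y" for y
  have "g (y + int p) = g y" for y unfolding g_def using psi_perY by simp
  then obtain j' where j': "j' \<in> {1..int p}" "g j = g j'" using per_reduce[where h=g] p0 by blast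
  show ?thesis
  proof (intro bexI)
    show "psi (i + 1) j - psi i j = psi (i' + 1) j' - psi i' j'" using i'(2) j'(2) unfolding h_def g_def by simp
  qed (use i' j' in auto)
qed

lemma DX_bound: "\<bar>psi (i+1) j - psi i j\<bar> \<le> e * C'"
proof -
  obtain i' j' where ij: "i'\<in>{1..int N}" "j'\<in>{1..int p}"
    and eq: "psi (i+1) j - psi i j = psi (i'+1) j' - psi i' j'" using psi_per_gen by blast
  have fin: "finite ((\<lambda>(i, j). \<bar>DX (1 / real N) psi i j\<bar>) ` ({1..int N} \<times> {1..int p}))" by simp
  have "\<bar>DX (1 / real N) psi i' j'\<bar> \<le> normLinf2 N p (DX (1 / real N) psi)"
    unfolding normLinf2_def by (rule Max_ge[OF fin]) (use ij in force)
  then have "\<bar>DX (1 / real N) psi i' j'\<bar> \<le> C'" using DXb by linarith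
  then have "real N * \<bar>psi (i'+1) j' - psi i' j'\<bar> \<le> C'" by (simp add: DX_def abs_mult mult.commute)
  then show ?thesis using N0 unfolding eq e_def by (simp add: field_simps)
qed

lemma C'_nonneg: "0 \<le> C'" using DX_bound[of 0 0] e_pos
  by (smt (verit) mult_pos_neg)

lemma inv_psi_diff: "\<bar>1 / psi (i+1) j - 1 / psi i j\<bar> \<le> e * C' / c\<^sup>2"
proof -
  have a: "1 / psi (i+1) j - 1 / psi i j = (psi i j - psi (i+1) j) / (psi (i+1) j * psi i j)"
    using psi_pos[of "i+1" j] psi_pos[of i j] by (simp add: field_simps)
  have b: "c\<^sup>2 \<le> psi (i+1) j * psi i j"
    unfolding power2_eq_square using psi_lo c0 psi_pos[THEN less_imp_le] by (intro mult_mono) (auto simp: less_imp_le)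
  have "\<bar>1 / psi (i+1) j - 1 / psi i j\<bar> = \<bar>psi (i+1) j - psi i j\<bar> / (psi (i+1) j * psi i j)"
    unfolding a using psi_pos[of "i+1" j] psi_pos[of i j] by (simp add: abs_minus_commute)
  also have "\<dots> \<le> (e * C') / c\<^sup>2"
    using DX_bound[of i j] b c0 e_pos C'_nonneg by (intro frac_le) auto
  finally show ?thesis by simp
qed

lemma A_diff: "\<bar>A (i+1) - A i\<bar> \<le> e * C' / c\<^sup>2"
proof -
  have "A (i+1) - A i = (\<Sum>r<p. 1 / psi (i+1) (1 + int r) - 1 / psi i (1 + int r)) / real p"
    by (simp add: A_sum sum_subtractf diff_divide_distrib)
  then have "\<bar>A (i+1) - A i\<bar> \<le> (\<Sum>r<p. \<bar>1 / psi (i+1) (1 + int r) - 1 / psi i (1 + int r)\<bar>) / real p"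
    using p0 by (simp add: divide_right_mono sum_abs)
  also have "\<dots> \<le> (\<Sum>r<p. e * C' / c\<^sup>2) / real p"
    using p0 by (intro divide_right_mono sum_mono inv_psi_diff) auto
  finally show ?thesis using p0 by simp
qed

lemma psi0_diff: "\<bar>psi0 (i+1) - psi0 i\<bar> \<le> C\<^sup>2 * (e * C' / c\<^sup>2)"
proof -
  have A0: "0 < A k" for k using psi0_pos[of k] unfolding psi0_eq by simp
  have "psi0 (i+1) - psi0 i = psi0 (i+1) * psi0 i * (A i - A (i+1))"
    unfolding psi0_eq using A0[of i] A0[of "i+1"] by (simp add: field_simps)
  then have "\<bar>psi0 (i+1) - psi0 i\<bar> = psi0 (i+1) * psi0 i * \<bar>A (i+1) - A i\<bar>"
    using psi0_pos[of i] psi0_pos[of "i+1"] by (simp add: abs_mult abs_minus_commute)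
  also have "\<dots> \<le> (C * C) * (e * C' / c\<^sup>2)"
    using psi0_bounds psi0_pos A_diff[of i] C0 by (intro mult_mono) (auto intro: mult_mono simp: less_imp_le)
  finally show ?thesis by (simp add: power2_eq_square)
qed


lemma chi_perY: "chi i (j + int p) = chi i j" using cell by (simp add: cell_solution_def per2_def)
lemma chi_perX: "chi (i + int N) j = chi i j" using cell by (simp add: cell_solution_def per2_def)
lemma chi_sum: "(\<Sum>r<p. chi i (1 + int r)) = 0"
  using cell p0 by (simp add: cell_solution_def avgY_def sum_int_conv)

lemma DY_chi: "DY chi i j = psi0 i / psi i j - 1"
proof -
  define T where "T j = psi i j * (1 + DY chi i j)" for j
  have step: "T (j + 1) = T j" for j
  proof -
    have h: "- DY (\<lambda>i' j'. psi i' j' * DY chi i' j') i j = DY psi i j"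
      using cell unfolding cell_solution_def by blast
    then show ?thesis unfolding T_def DY_def by (simp add: algebra_simps)
  qed
  have Tc: "T j = T 1" for j
  proof (induction j rule: int_induct[where k=1])
    case base then show ?case by simp
  next
    case (step1 i) then show ?case using step[of i] by simp
  next
    case (step2 i) then show ?case using step[of "i-1"] by simp
  qed
  have tel: "(\<Sum>r<p. DY chi i (1 + int r)) = 0"
  proof -
    have "(\<Sum>r<p. DY chi i (1 + int r)) = (\<Sum>r<p. (\<lambda>r. chi i (1 + int r)) (Suc r) - (\<lambda>r. chi i (1 + int r)) r)"
      by (simp add: DY_def add.assoc)
    also have "\<dots> = chi i (1 + int p) - chi i 1" by (subst sum_lessThan_telescope) simp
    also have "\<dots> = 0" using chi_perY[of i 1] by (simp add: add.commute)
    finally show ?thesis .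
  qed
  have one: "1 + DY chi i j = T 1 / psi i j" for j
    using Tc[of j] psi_pos[of i j] unfolding T_def by (simp add: field_simps)
  have "real p = (\<Sum>r<p. 1 + DY chi i (1 + int r))" using tel by (simp add: sum.distrib)
  also have "\<dots> = T 1 * (\<Sum>r<p. 1 / psi i (1 + int r))"
    by (simp add: one sum_distrib_left)
  also have "\<dots> = T 1 * real p * A i" using p0 by (simp add: A_sum)
  finally have "T 1 * A i = 1" using p0 by simp
  then have "T 1 = 1 / A i" by (auto simp: eq_divide_eq)
  then have "T 1 = psi0 i" by (simp add: psi0_eq)
  then show ?thesis using one[of j] by simp
qed

definition "M = C / c + 1"
definition "Lg = C\<^sup>2 * C' / c^3 + C * C' / c\<^sup>2"

lemma DY_chi_bound: "\<bar>chi i (j+1) - chi i j\<bar> \<le> M"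
proof -
  have "chi i (j+1) - chi i j = psi0 i / psi i j - 1" using DY_chi[of i j] by (simp add: DY_def)
  moreover have "0 \<le> psi0 i / psi i j" using psi0_pos psi_pos by (simp add: less_imp_le)
  moreover have "psi0 i / psi i j \<le> C / c"
    using psi0_bounds(2)[of i] psi_lo[of i j] psi0_pos[of i] c0 by (intro frac_le) auto
  ultimately show ?thesis unfolding M_def by linarith
qed

lemma chi_bound: "\<bar>chi i j\<bar> \<le> real p * M"
  by (rule zero_mean_bound[where h="chi i", OF p0 chi_perY chi_sum DY_chi_bound])

lemma DY_chi_diff: "\<bar>(chi (i+1) (j+1) - chi (i+1) j) - (chi i (j+1) - chi i j)\<bar> \<le> e * Lg"
proof -
  have "(chi (i+1) (j+1) - chi (i+1) j) - (chi i (j+1) - chi i j) = psi0 (i+1) / psi (i+1) j - psi0 i / psi i j"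
    using DY_chi[of i j] DY_chi[of "i+1" j] by (simp add: DY_def)
  also have "\<dots> = (psi0 (i+1) - psi0 i) * (1 / psi (i+1) j) + psi0 i * (1 / psi (i+1) j - 1 / psi i j)"
    using psi_pos[of "i+1" j] psi_pos[of i j] by (simp add: field_simps)
  finally have eq: "(chi (i+1) (j+1) - chi (i+1) j) - (chi i (j+1) - chi i j) = \<dots>" .
  have a: "\<bar>(psi0 (i+1) - psi0 i) * (1 / psi (i+1) j)\<bar> \<le> (C\<^sup>2 * (e * C' / c\<^sup>2)) * (1 / c)"
    unfolding abs_mult using psi0_diff[of i] psi_lo[of "i+1" j] psi_pos[of "i+1" j] c0
    by (intro mult_mono) (auto simp: frac_le)
  have b: "\<bar>psi0 i * (1 / psi (i+1) j - 1 / psi i j)\<bar> \<le> C * (e * C' / c\<^sup>2)"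
    unfolding abs_mult using psi0_bounds(2)[of i] psi0_pos[of i] inv_psi_diff[of i j] C0
    by (intro mult_mono) auto
  have "\<bar>(chi (i+1) (j+1) - chi (i+1) j) - (chi i (j+1) - chi i j)\<bar>
     \<le> (C\<^sup>2 * (e * C' / c\<^sup>2)) * (1 / c) + C * (e * C' / c\<^sup>2)"
    unfolding eq using a b by linarith
  also have "\<dots> = e * Lg" unfolding Lg_def using c0 by (simp add: field_simps power2_eq_square power3_eq_cube)
  finally show ?thesis .
qed

lemma chi_diff: "\<bar>chi (i+1) j - chi i j\<bar> \<le> real p * (e * Lg)"
proof -
  have "\<bar>(\<lambda>j. chi (i+1) j - chi i j) j\<bar> \<le> real p * (e * Lg)"
  proof (rule zero_mean_bound[OF p0])
    show "(\<Sum>r<p. chi (i+1) (1 + int r) - chi i (1 + int r)) = 0"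
      using chi_sum[of i] chi_sum[of "i+1"] by (simp add: sum_subtractf)
  qed (use chi_perY DY_chi_diff[of i] in \<open>auto simp: algebra_simps\<close>)
  then show ?thesis by simp
qed


definition "sig i = psi i i * Dd e u i" for i
definition "sig0 i = psi0 i * Dd e u0 i" for i
definition "Fs = e * (\<Sum>k<N. \<bar>f (1 + int k)\<bar>)"
definition "nf = normL2 N f"

lemma psi_perY_N: "psi i (j + int N) = psi i j"
proof -
  obtain q where q: "N = p * q" using pdvd by blast
  have "psi i (j + int q * int p) = psi i j"
    by (rule per_mult[where h="psi i"]) (rule psi_perY)
  then show ?thesis using q by (simp add: mult.commute)
qed

lemma per_oscil: "per N (oscil psi)"
  unfolding per_def oscil_def using psi_perX psi_perY_N by simp

lemma per_psi0: "per N (psi_hom p psi)"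
  unfolding per_def psi_hom_def avgY_def using psi_perX by simp

lemma sig_step: "sig (i+1) = sig i - f (i+1) / real N"
  using weak_pointwise[OF N0 per_oscil wu perf, of i] by (simp add: sig_def oscil_def e_def)

lemma sig0_step: "sig0 (i+1) = sig0 i - f (i+1) / real N"
  using weak_pointwise[OF N0 per_psi0 wu0 perf, of i] by (simp add: sig0_def psi0_def e_def)

definition "d = sig 0 - sig0 0"

lemma sig_d: "sig i = sig0 i + d"
proof (induction i rule: int_induct[where k=0])
  case base then show ?case by (simp add: d_def)
next
  case (step1 i) then show ?case using sig_step[of i] sig0_step[of i] by simp
next
  case (step2 i) then show ?case using sig_step[of "i-1"] sig0_step[of "i-1"] by simp
qed

lemma Du_eq: "Dd e u i = sig i / psi i i" using psi_pos[of i i] by (simp add: sig_def)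
lemma Du0_eq: "Dd e u0 i = sig0 i / psi0 i" using psi0_pos[of i] by (simp add: sig0_def)

lemma pu: "per N u" using wu by (simp add: weak_sol_def)
lemma pu0: "per N u0" using wu0 by (simp add: weak_sol_def)

lemma sig0_incr: "\<bar>sig0 (i+1) - sig0 i\<bar> = e * \<bar>f (i+1)\<bar>"
proof -
  have "sig0 (i+1) - sig0 i = - (f (i+1) / real N)" using sig0_step[of i] by simp
  then show ?thesis using N0 by (simp add: e_def)
qed

lemma absf_shift: "(\<Sum>k<N. \<bar>f (a + int k)\<bar>) = (\<Sum>k<N. \<bar>f (1 + int k)\<bar>)"
  by (rule per_shift[where h="\<lambda>x. \<bar>f x\<bar>"]) (use perf in \<open>simp add: per_def\<close>)

lemma sig0_bound: "\<bar>sig0 i\<bar> \<le> Fs"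
proof -
  have "\<bar>(\<lambda>r. sig0 (i + int r)) 0\<bar> \<le> Fs"
  proof (rule weighted_zero[where q="\<lambda>r. 1 / psi0 (i + int r)", OF N0])
    show "0 < 1 / psi0 (i + int r)" for r using psi0_pos by simp
    show "(\<Sum>r<N. 1 / psi0 (i + int r) * sig0 (i + int r)) = 0"
      using Dd_sum_zero[OF pu0 N0, of e i] by (simp add: Du0_eq)
    fix r assume r: "r < N"
    have "\<bar>sig0 (i + int r) - sig0 i\<bar> \<le> (\<Sum>k<r. \<bar>sig0 (i + int k + 1) - sig0 (i + int k)\<bar>)"
      by (rule incr_bound)
    also have "\<dots> = (\<Sum>k<r. e * \<bar>f (i + 1 + int k)\<bar>)"
    proof (rule sum.cong[OF refl])
      fix k
      show "\<bar>sig0 (i + int k + 1) - sig0 (i + int k)\<bar> = e * \<bar>f (i + 1 + int k)\<bar>"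
        using sig0_incr[of "i + int k"] by (simp add: add_ac)
    qed
    also have "\<dots> \<le> (\<Sum>k<N. e * \<bar>f (i + 1 + int k)\<bar>)"
      using r e_pos by (intro sum_mono2) auto
    also have "\<dots> = Fs" unfolding Fs_def using absf_shift[of "i+1"] by (simp only: sum_distrib_left[symmetric])
    finally show "\<bar>sig0 (i + int r) - sig0 (i + int 0)\<bar> \<le> Fs" by simp
  qed
  then show ?thesis by simp
qed

lemma nf_eq: "nf = sqrt ((\<Sum>k<N. (f (1 + int k))\<^sup>2) / real N)"
  by (simp add: nf_def normL2_def avgX_def sum_int_conv)

lemma nf_nonneg: "0 \<le> nf" unfolding nf_eq by (intro real_sqrt_ge_zero divide_nonneg_nonneg sum_nonneg) auto

lemma Fs_le: "Fs \<le> nf"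
proof -
  have "Fs\<^sup>2 = e\<^sup>2 * (\<Sum>k<N. \<bar>f (1 + int k)\<bar>)\<^sup>2" by (simp add: Fs_def power_mult_distrib)
  also have "\<dots> \<le> e\<^sup>2 * (real N * (\<Sum>k<N. (f (1 + int k))\<^sup>2))"
    using cs_sum[of "\<lambda>k. f (1 + int k)" N] by (intro mult_left_mono) auto
  also have "\<dots> = (\<Sum>k<N. (f (1 + int k))\<^sup>2) / real N"
    using N0 by (simp add: e_def power2_eq_square field_simps)
  finally show ?thesis unfolding nf_eq by (rule real_le_rsqrt)
qed

lemma sig0_nf: "\<bar>sig0 i\<bar> \<le> nf" using sig0_bound Fs_le by (rule order_trans)


lemma Nq: obtains q where "N = q * p" "e * real q * real p = 1"
proof -
  obtain q where q: "N = p * q" using pdvd by blast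
  have eN: "e * real N = 1" using N0 by (simp add: e_def)
  have r: "real q * real p = real N" using q by simp
  have "e * real q * real p = 1" using eN r by (metis mult.assoc)
  moreover have "N = q * p" using q by (simp add: mult.commute)
  ultimately show ?thesis using that by blast
qed

lemma block_app:
  fixes w :: "int \<Rightarrow> int \<Rightarrow> real"
  assumes "\<And>i j. w i (j + int p) = w i j" "\<And>i. (\<Sum>r<p. w i (1 + int r)) = 0"
    "\<And>i j. \<bar>w i j\<bar> \<le> W" "\<And>i j. \<bar>w (i+1) j - w i j\<bar> \<le> e*L"
  shows "\<bar>\<Sum>k<N. sig0 (1 + int k) * w (1 + int k) (1 + int k)\<bar> \<le> (real p * L + real p * W) * nf"
proof -
  obtain q where q: "N = q * p" "e * real q * real p = 1" by (rule Nq)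
  have W0: "0 \<le> W" using assms(3)[of 0 0] by linarith
  have "\<bar>\<Sum>k<N. sig0 (1 + int k) * w (1 + int k) (1 + int k)\<bar>
     \<le> real q * (real p * real p * e * nf * L) + real p * W * e * (\<Sum>k<N. \<bar>f (2 + int k)\<bar>)"
    by (rule block_bound[where w=w and s=sig0 and g=f, OF p0 less_imp_le[OF e_pos] q(1) assms sig0_nf])
       (simp add: sig0_incr)
  also have "real q * (real p * real p * e * nf * L) = real p * L * nf * (e * real q * real p)"
    by (simp add: algebra_simps)
  also have "\<dots> = real p * L * nf" using q(2) by simp
  also have "real p * W * e * (\<Sum>k<N. \<bar>f (2 + int k)\<bar>) = real p * W * Fs"
    unfolding Fs_def using absf_shift[of 2] by simp
  also have "real p * W * Fs \<le> real p * W * nf" using Fs_le W0 by (intro mult_left_mono) auto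
  finally show ?thesis by (simp add: algebra_simps)
qed

definition "Ld = 2 * C' / c\<^sup>2"
definition "Wd = 2 / c"
definition "Kd = real p * Ld + real p * Wd"

lemma inv_psi_le: "\<bar>1 / psi i j\<bar> \<le> 1 / c"
  using psi_lo[of i j] psi_pos[of i j] c0 by (simp add: frac_le)
lemma inv_psi0_le: "\<bar>1 / psi0 i\<bar> \<le> 1 / c"
  using psi0_bounds(1)[of i] psi0_pos[of i] c0 by (simp add: frac_le)

lemma Sigma_bound:
  "\<bar>\<Sum>k<N. sig0 (1 + int k) * (1 / psi (1 + int k) (1 + int k) - 1 / psi0 (1 + int k))\<bar> \<le> Kd * nf"
proof -
  define w where "w i j = 1 / psi i j - 1 / psi0 i" for i j
  have "\<bar>\<Sum>k<N. sig0 (1 + int k) * w (1 + int k) (1 + int k)\<bar>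
      \<le> (real p * Ld + real p * Wd) * nf"
  proof (rule block_app[where w=w])
    show "w i (j + int p) = w i j" for i j
      by (simp add: w_def psi_perY)
    show "(\<Sum>r<p. w i (1 + int r)) = 0" for i
      using p0 by (simp add: w_def sum_subtractf A_sum psi0_eq)
    show "\<bar>w i j\<bar> \<le> Wd" for i j
      using inv_psi_le[of i j] inv_psi0_le[of i] unfolding Wd_def w_def by linarith
    show "\<bar>w (i+1) j - w i j\<bar> \<le> e * Ld" for i j
      using inv_psi_diff[of i j] A_diff[of i] unfolding psi0_eq Ld_def w_def by (simp add: abs_le_iff; linarith)
  qed
  then show ?thesis by (simp add: Kd_def w_def)
qed

lemma d_bound: "\<bar>d\<bar> \<le> e * C * (Kd * nf)"
proof -
  define P where "P = (\<Sum>k<N. 1 / psi (1 + int k) (1 + int k))"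
  define Sg where "Sg = (\<Sum>k<N. sig0 (1 + int k) * (1 / psi (1 + int k) (1 + int k) - 1 / psi0 (1 + int k)))"
  have z1: "(\<Sum>k<N. (sig0 (1 + int k) + d) / psi (1 + int k) (1 + int k)) = 0"
    using Dd_sum_zero[OF pu N0, of e 1] by (simp add: Du_eq sig_d)
  have z2: "(\<Sum>k<N. sig0 (1 + int k) / psi0 (1 + int k)) = 0"
    using Dd_sum_zero[OF pu0 N0, of e 1] by (simp add: Du0_eq)
  have "d * P + Sg = (\<Sum>k<N. (sig0 (1 + int k) + d) / psi (1 + int k) (1 + int k))
        - (\<Sum>k<N. sig0 (1 + int k) / psi0 (1 + int k))"
    unfolding P_def Sg_def by (simp add: sum_distrib_left sum_subtractf[symmetric] sum.distrib[symmetric] add_divide_distrib algebra_simps)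
  then have dP: "d * P = - Sg" using z1 z2 by simp
  have "(\<Sum>k<N. 1 / C) \<le> P" unfolding P_def
    by (rule sum_mono) (use psi_hi psi_pos in \<open>simp add: frac_le\<close>)
  then have Pl: "real N / C \<le> P" by simp
  have Pp: "0 < real N / C" using N0 C0 by simp
  have "\<bar>d\<bar> * (real N / C) \<le> \<bar>d\<bar> * P" using Pl by (intro mult_left_mono) auto
  also have "\<dots> = \<bar>d * P\<bar>" using Pp Pl by (simp add: abs_mult)
  also have "\<dots> = \<bar>Sg\<bar>" using dP by simp
  also have "\<dots> \<le> Kd * nf" unfolding Sg_def by (rule Sigma_bound)
  finally have "\<bar>d\<bar> * (real N / C) \<le> Kd * nf" .
  then show ?thesis using N0 C0 by (simp add: e_def field_simps)
qed


definition "Ww = real p * M / c"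
definition "Lw = real p * Lg / c + real p * M * C' / c\<^sup>2"
definition "C2c = real p * Lw + real p * Ww"

lemma M_nonneg: "0 \<le> M" unfolding M_def using c0 C0 by simp

lemma goal2: "\<bar>avgX N (corrector N chi u0)\<bar> \<le> e\<^sup>2 * C2c * nf"
proof -
  define w where "w i j = chi i j / psi0 i" for i j
  have B: "\<bar>\<Sum>k<N. sig0 (1 + int k) * w (1 + int k) (1 + int k)\<bar> \<le> (real p * Lw + real p * Ww) * nf"
  proof (rule block_app[where w=w])
    show "w i (j + int p) = w i j" for i j by (simp add: w_def chi_perY)
    show "(\<Sum>r<p. w i (1 + int r)) = 0" for i
      using chi_sum[of i] by (simp add: w_def sum_divide_distrib[symmetric])
    show "\<bar>w i j\<bar> \<le> Ww" for i j
    proof -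
      have "\<bar>w i j\<bar> = \<bar>chi i j\<bar> * \<bar>1 / psi0 i\<bar>" by (simp add: w_def abs_mult divide_inverse)
      also have "\<dots> \<le> (real p * M) * (1 / c)"
        using chi_bound[of i j] inv_psi0_le[of i] M_nonneg by (intro mult_mono) auto
      finally show ?thesis by (simp add: Ww_def)
    qed
    show "\<bar>w (i+1) j - w i j\<bar> \<le> e * Lw" for i j
    proof -
      have eq: "w (i+1) j - w i j = (chi (i+1) j - chi i j) * (1 / psi0 (i+1)) + chi i j * (1 / psi0 (i+1) - 1 / psi0 i)"
        by (simp add: w_def algebra_simps diff_divide_distrib)
      have "\<bar>w (i+1) j - w i j\<bar> \<le> \<bar>chi (i+1) j - chi i j\<bar> * \<bar>1 / psi0 (i+1)\<bar> + \<bar>chi i j\<bar> * \<bar>1 / psi0 (i+1) - 1 / psi0 i\<bar>"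
        unfolding eq abs_mult[symmetric] by (rule abs_triangle_ineq)
      also have "\<dots> \<le> (real p * (e * Lg)) * (1 / c) + (real p * M) * (e * C' / c\<^sup>2)"
      proof (rule add_mono)
        show "\<bar>chi (i+1) j - chi i j\<bar> * \<bar>1 / psi0 (i+1)\<bar> \<le> (real p * (e * Lg)) * (1 / c)"
          using chi_diff[of i j] inv_psi0_le[of "i+1"] c0 by (intro mult_mono) auto
        show "\<bar>chi i j\<bar> * \<bar>1 / psi0 (i+1) - 1 / psi0 i\<bar> \<le> (real p * M) * (e * C' / c\<^sup>2)"
          using chi_bound[of i j] A_diff[of i] M_nonneg unfolding psi0_eq by (intro mult_mono) auto
      qed
      also have "\<dots> = e * Lw" by (simp add: Lw_def algebra_simps)
      finally show ?thesis .
    qed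
  qed
  have u0avg: "avgX N u0 = 0" using wu0 by (simp add: weak_sol_def)
  have "avgX N (corrector N chi u0) = avgX N u0 + e * ((1 / real N) * (\<Sum>k<N. chi (1 + int k) (1 + int k) * Dd e u0 (1 + int k)))"
    by (simp add: avgX_def corrector_def sum_int_conv sum.distrib sum_distrib_left e_def algebra_simps)
  also have "\<dots> = e\<^sup>2 * (\<Sum>k<N. sig0 (1 + int k) * w (1 + int k) (1 + int k))"
  proof -
    have se: "(\<Sum>k<N. chi (1 + int k) (1 + int k) * Dd e u0 (1 + int k)) = (\<Sum>k<N. sig0 (1 + int k) * w (1 + int k) (1 + int k))"
      by (rule sum.cong[OF refl]) (simp add: Du0_eq w_def)
    have eN: "1 / real N = e" by (simp add: e_def)
    show ?thesis unfolding se eN u0avg by (simp add: power2_eq_square)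
  qed
  finally have "\<bar>avgX N (corrector N chi u0)\<bar> = e\<^sup>2 * \<bar>\<Sum>k<N. sig0 (1 + int k) * w (1 + int k) (1 + int k)\<bar>"
    by (simp add: abs_mult)
  also have "\<dots> \<le> e\<^sup>2 * ((real p * Lw + real p * Ww) * nf)" using B by (intro mult_left_mono) auto
  finally show ?thesis by (simp add: C2c_def)
qed


definition "Ac = real p * M / c"
definition "Bc = real p * M * C' / c\<^sup>2 + real p * Lg / c + C * Kd / c"
definition "C1c = sqrt (2 * (Ac\<^sup>2 + Bc\<^sup>2))"

lemma corr_eq: "corrector N chi u0 i = u0 i + e * chi i i * Dd e u0 i"
  by (simp add: corrector_def e_def)

lemma g_eq: "Dd e (\<lambda>i. corrector N chi u0 i - u i) i =
   chi (i+1) (i+1) * (Dd e u0 (i+1) - Dd e u0 i) + (chi (i+1) (i+1) - chi i (i+1)) * Dd e u0 i - d / psi i i"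
proof -
  have e0: "e \<noteq> 0" using e_pos by simp
  have g1: "Dd e (\<lambda>i. corrector N chi u0 i - u i) i
     = Dd e u0 i + chi (i+1) (i+1) * Dd e u0 (i+1) - chi i i * Dd e u0 i - Dd e u i"
    unfolding corr_eq using e0 by (simp add: Dd_def field_simps)
  have r: "psi0 i / psi i i = 1 + chi i (i+1) - chi i i" using DY_chi[of i i] by (simp add: DY_def)
  have "Dd e u i = (sig0 i + d) / psi i i" by (simp add: Du_eq sig_d)
  also have "\<dots> = Dd e u0 i * (psi0 i / psi i i) + d / psi i i"
    by (simp add: sig0_def add_divide_distrib)
  also have "\<dots> = Dd e u0 i * (1 + chi i (i+1) - chi i i) + d / psi i i" by (simp add: r)
  finally have "Dd e u i = Dd e u0 i * (1 + chi i (i+1) - chi i i) + d / psi i i" .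
  then show ?thesis unfolding g1 by (simp add: algebra_simps)
qed

lemma Du0_bound: "\<bar>Dd e u0 i\<bar> \<le> nf / c"
proof -
  have "\<bar>Dd e u0 i\<bar> = \<bar>sig0 i\<bar> * \<bar>1 / psi0 i\<bar>" by (simp add: Du0_eq abs_mult divide_inverse)
  also have "\<dots> \<le> nf * (1 / c)" using sig0_nf inv_psi0_le nf_nonneg by (intro mult_mono) auto
  finally show ?thesis by simp
qed

lemma Du0_diff: "\<bar>Dd e u0 (i+1) - Dd e u0 i\<bar> \<le> e * \<bar>f (i+1)\<bar> * (1 / c) + nf * (e * C' / c\<^sup>2)"
proof -
  have eq: "Dd e u0 (i+1) - Dd e u0 i = (sig0 (i+1) - sig0 i) * A (i+1) + sig0 i * (A (i+1) - A i)"
    by (simp add: Du0_eq psi0_eq algebra_simps)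
  have "\<bar>Dd e u0 (i+1) - Dd e u0 i\<bar> \<le> \<bar>sig0 (i+1) - sig0 i\<bar> * \<bar>A (i+1)\<bar> + \<bar>sig0 i\<bar> * \<bar>A (i+1) - A i\<bar>"
    unfolding eq abs_mult[symmetric] by (rule abs_triangle_ineq)
  also have "\<dots> \<le> e * \<bar>f (i+1)\<bar> * (1 / c) + nf * (e * C' / c\<^sup>2)"
  proof (rule add_mono)
    have "\<bar>A (i+1)\<bar> \<le> 1 / c" using inv_psi0_le[of "i+1"] by (simp add: psi0_eq)
    then have "e * \<bar>f (i+1)\<bar> * \<bar>A (i+1)\<bar> \<le> e * \<bar>f (i+1)\<bar> * (1 / c)"
      by (rule mult_left_mono) (use e_pos in auto)
    then show "\<bar>sig0 (i+1) - sig0 i\<bar> * \<bar>A (i+1)\<bar> \<le> e * \<bar>f (i+1)\<bar> * (1 / c)"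
      using sig0_incr[of i] by simp
    show "\<bar>sig0 i\<bar> * \<bar>A (i+1) - A i\<bar> \<le> nf * (e * C' / c\<^sup>2)"
      using sig0_nf A_diff nf_nonneg by (intro mult_mono) auto
  qed
  finally show ?thesis .
qed

lemma g_bound: "\<bar>Dd e (\<lambda>i. corrector N chi u0 i - u i) i\<bar> \<le> e * (Ac * \<bar>f (i+1)\<bar> + Bc * nf)"
proof -
  have t1: "\<bar>chi (i+1) (i+1) * (Dd e u0 (i+1) - Dd e u0 i)\<bar> \<le> (real p * M) * (e * \<bar>f (i+1)\<bar> * (1 / c) + nf * (e * C' / c\<^sup>2))"
    unfolding abs_mult using chi_bound Du0_diff M_nonneg by (intro mult_mono) auto
  have t2: "\<bar>(chi (i+1) (i+1) - chi i (i+1)) * Dd e u0 i\<bar> \<le> (real p * (e * Lg)) * (nf / c)"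
  proof -
    have "0 \<le> real p * (e * Lg)" using chi_diff[of 0 0] by (meson abs_ge_zero order_trans)
    then show ?thesis
      unfolding abs_mult using chi_diff Du0_bound nf_nonneg c0 by (intro mult_mono) auto
  qed
  have t3: "\<bar>d / psi i i\<bar> \<le> (e * C * (Kd * nf)) * (1 / c)"
    using d_bound inv_psi_le[of i i] by (simp add: abs_mult divide_inverse mult_mono)
  have "\<bar>Dd e (\<lambda>i. corrector N chi u0 i - u i) i\<bar> \<le>
     (real p * M) * (e * \<bar>f (i+1)\<bar> * (1 / c) + nf * (e * C' / c\<^sup>2)) + (real p * (e * Lg)) * (nf / c)
     + (e * C * (Kd * nf)) * (1 / c)"
    unfolding g_eq using t1 t2 t3 by linarith
  also have "\<dots> = e * (Ac * \<bar>f (i+1)\<bar> + Bc * nf)" by (simp add: Ac_def Bc_def algebra_simps)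
  finally show ?thesis .
qed

lemma goal1: "semiH1 N (1 / real N) (\<lambda>i. corrector N chi u0 i - u i) \<le> e * C1c * nf"
proof -
  define g where "g i = Dd e (\<lambda>i. corrector N chi u0 i - u i) i" for i
  have eN: "1 / real N = e" by (simp add: e_def)
  have sq: "(g i)\<^sup>2 \<le> 2 * e\<^sup>2 * (Ac\<^sup>2 * (f (i+1))\<^sup>2 + Bc\<^sup>2 * nf\<^sup>2)" for i
  proof -
    have "\<bar>g i\<bar> \<le> e * (Ac * \<bar>f (i+1)\<bar> + Bc * nf)" unfolding g_def by (rule g_bound)
    then have "(g i)\<^sup>2 \<le> (e * (Ac * \<bar>f (i+1)\<bar> + Bc * nf))\<^sup>2"
      by (metis abs_ge_zero order_trans power2_abs power_mono)
    also have "\<dots> = e\<^sup>2 * (Ac * \<bar>f (i+1)\<bar> + Bc * nf)\<^sup>2" by (simp add: power_mult_distrib)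
    also have "\<dots> \<le> e\<^sup>2 * (2 * (Ac\<^sup>2 * (f (i+1))\<^sup>2 + Bc\<^sup>2 * nf\<^sup>2))"
    proof (rule mult_left_mono)
      have "0 \<le> (Ac * \<bar>f (i+1)\<bar> - Bc * nf)\<^sup>2" by simp
      then show "(Ac * \<bar>f (i+1)\<bar> + Bc * nf)\<^sup>2 \<le> 2 * (Ac\<^sup>2 * (f (i+1))\<^sup>2 + Bc\<^sup>2 * nf\<^sup>2)"
        by (simp add: power2_eq_square algebra_simps)
    qed simp
    finally show ?thesis by (simp add: algebra_simps)
  qed
  have fs: "(\<Sum>k<N. (f (2 + int k))\<^sup>2) = (\<Sum>k<N. (f (1 + int k))\<^sup>2)"
    by (rule per_shift[where h="\<lambda>x. (f x)\<^sup>2"]) (use perf in \<open>simp add: per_def\<close>)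
  have nf2: "nf\<^sup>2 = (\<Sum>k<N. (f (1 + int k))\<^sup>2) / real N"
    unfolding nf_eq by (intro real_sqrt_pow2 divide_nonneg_nonneg sum_nonneg) auto
  have "avgX N (\<lambda>i. (g i)\<^sup>2) = (\<Sum>k<N. (g (1 + int k))\<^sup>2) / real N"
    by (simp add: avgX_def sum_int_conv)
  also have "\<dots> \<le> (\<Sum>k<N. 2 * e\<^sup>2 * (Ac\<^sup>2 * (f (2 + int k))\<^sup>2 + Bc\<^sup>2 * nf\<^sup>2)) / real N"
  proof (rule divide_right_mono)
    show "(\<Sum>k<N. (g (1 + int k))\<^sup>2) \<le> (\<Sum>k<N. 2 * e\<^sup>2 * (Ac\<^sup>2 * (f (2 + int k))\<^sup>2 + Bc\<^sup>2 * nf\<^sup>2))"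
    proof (rule sum_mono)
      fix k show "(g (1 + int k))\<^sup>2 \<le> 2 * e\<^sup>2 * (Ac\<^sup>2 * (f (2 + int k))\<^sup>2 + Bc\<^sup>2 * nf\<^sup>2)"
        using sq[of "1 + int k"] by (simp add: add.commute add.left_commute)
    qed
  qed simp
  also have "\<dots> = 2 * e\<^sup>2 * (Ac\<^sup>2 * ((\<Sum>k<N. (f (2 + int k))\<^sup>2) / real N) + Bc\<^sup>2 * nf\<^sup>2)"
    using N0 by (simp add: sum.distrib sum_distrib_left[symmetric] field_simps)
  also have "\<dots> = (e * C1c * nf)\<^sup>2"
    unfolding fs nf2[symmetric] C1c_def
    by (simp add: power_mult_distrib algebra_simps)
  finally have av: "avgX N (\<lambda>i. (g i)\<^sup>2) \<le> (e * C1c * nf)\<^sup>2" .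
  have pos: "0 \<le> e * C1c * nf" using e_pos nf_nonneg by (simp add: C1c_def)
  have "semiH1 N (1 / real N) (\<lambda>i. corrector N chi u0 i - u i) = sqrt (avgX N (\<lambda>i. (g i)\<^sup>2))"
    unfolding semiH1_def normL2_def eN g_def by simp
  also have "\<dots> \<le> e * C1c * nf" by (rule real_le_lsqrt[OF pos av])
  finally show ?thesis .
qed

end


theorem theorem4p5:
  fixes c_psi C_psi C'_psi :: real and p :: nat
  assumes "0 < c_psi" and "0 < p"
  shows "\<exists>C1 C2 :: real. \<forall>(N :: nat) psi chi f u u0.
     0 < N \<and> p dvd N \<and> per2 N p psi
     \<and> (\<forall>i j. c_psi \<le> psi i j \<and> psi i j \<le> C_psi)
     \<and> normLinf2 N p (DX (1 / real N) psi) \<le> C'_psi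
     \<and> cell_solution N p psi chi
     \<and> per N f \<and> avgX N f = 0
     \<and> weak_sol N (oscil psi) f u
     \<and> weak_sol N (psi_hom p psi) f u0
     \<longrightarrow> semiH1 N (1 / real N) (\<lambda>i. corrector N chi u0 i - u i) \<le> (1 / real N) * C1 * normL2 N f
       \<and> \<bar>avgX N (corrector N chi u0)\<bar> \<le> (1 / real N)\<^sup>2 * C2 * normL2 N f"
proof -
  define c C C' where "c = c_psi" and "C = C_psi" and "C' = C'_psi"
  define M where "M = C / c + 1"
  define Lg where "Lg = C\<^sup>2 * C' / c^3 + C * C' / c\<^sup>2"
  define Kd where "Kd = real p * (2 * C' / c\<^sup>2) + real p * (2 / c)"
  define Ac where "Ac = real p * M / c"
  define Bc where "Bc = real p * M * C' / c\<^sup>2 + real p * Lg / c + C * Kd / c"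
  define C1 where "C1 = sqrt (2 * (Ac\<^sup>2 + Bc\<^sup>2))"
  define Lw where "Lw = real p * Lg / c + real p * M * C' / c\<^sup>2"
  define Ww where "Ww = real p * M / c"
  define C2 where "C2 = real p * Lw + real p * Ww"
  show ?thesis
  proof (intro exI allI impI)
    fix N psi chi f u u0
    assume H: "0 < N \<and> p dvd N \<and> per2 N p psi
     \<and> (\<forall>i j. c_psi \<le> psi i j \<and> psi i j \<le> C_psi)
     \<and> normLinf2 N p (DX (1 / real N) psi) \<le> C'_psi
     \<and> cell_solution N p psi chi
     \<and> per N f \<and> avgX N f = 0
     \<and> weak_sol N (oscil psi) f u
     \<and> weak_sol N (psi_hom p psi) f u0"
    interpret S: setting N p psi chi f u u0 c_psi C_psi C'_psi
      using H assms by unfold_locales auto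
    have c1: "S.C1c = C1"
      by (simp add: S.C1c_def S.Ac_def S.Bc_def S.M_def S.Lg_def S.Kd_def S.Ld_def S.Wd_def
          C1_def Ac_def Bc_def M_def Lg_def Kd_def c_def C_def C'_def)
    have c2: "S.C2c = C2"
      by (simp add: S.C2c_def S.Lw_def S.Ww_def S.M_def S.Lg_def
          C2_def Lw_def Ww_def M_def Lg_def c_def C_def C'_def)
    have e: "S.e = 1 / real N" by (simp add: S.e_def)
    show "semiH1 N (1 / real N) (\<lambda>i. corrector N chi u0 i - u i) \<le> (1 / real N) * C1 * normL2 N f
       \<and> \<bar>avgX N (corrector N chi u0)\<bar> \<le> (1 / real N)\<^sup>2 * C2 * normL2 N f"
      using S.goal1 S.goal2 unfolding c1 c2 e S.nf_def by simp
  qed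
qed

end
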